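(* Let $\mathbb{Z}$ be a finite-dimensional Euclidean space, $L>0$, $G:\mathbb{Z}\to\mathbb{Z}$ $\frac1L$-co-coercive with a zero $z^*$ ($G(z^* )=0$). Let $\gamma_k\ge0$ be such that $\sum_{k\ge0}(k+1)^2\gamma_k^2<\infty$. Let $\{z^k\}$ be generated from $z^0\in\mathbb{Z}$ by: for $k\ge 0$, choose $\tilde z^k$ with $\|G(z^k)-\tilde z^k\|\le\gamma_k$ and set $z^{k+1}=\beta_k z^0+(1-\beta_k)z^k-\eta_k\tilde z^k$ with $\beta_k=1/(k+2)$, $\eta_k=(1-\beta_k)/L$. Then $\|G(z^k)\|\le O(k^{-1})$ and $\|z^{k+1}-z^k\|\le O(k^{-1})$ for $k\ge0$; i.e., there is a constant $C>0$ independent of $k$ with $\|G(z^k)\|\le C/(k+1)$ and $\|z^{k+1}-z^k\|\le C/(k+1)$ for all $k\ge0$.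
   Context: A map $G:\mathbb{Z}\to\mathbb{Z}$ is $c$-co-coercive if $\langle G(x_1)-G(x_2),x_1-x_2\rangle\ge c\|G(x_1)-G(x_2)\|^2$ for all $x_1,x_2$. *)

theory Defs
  imports "HOL-Analysis.Analysis"
begin

definition co_coercive :: "real \<Rightarrow> ('a::real_inner \<Rightarrow> 'a) \<Rightarrow> bool" where
  "co_coercive c G \<longleftrightarrow>
     (\<forall>x1 x2. inner (G x1 - G x2) (x1 - x2) \<ge> c * (norm (G x1 - G x2))\<^sup>2)"

end

theory Submission
  imports Defs
begin

lemma pot_scalar:
  fixes n bb ab aa be ae bw aw ee :: real
  assumes n: "n > 0"
    and H: "n * (n+1) * (bb - 2*ab + aa) \<le> n * (- bw - n*ab - n*be + aw + n*aa + n*ae)"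
    and Q: "0 \<le> bb + aa + ee - 2*ab + 2*be - 2*ae"
  shows "n*(n+1)/2*bb + n*bw - n*ab - n*be \<le> (n-1)*n/2*aa + n*aw + n*(n+1)/2*ee - n*ae"
proof -
  have q: "0 \<le> n*(n+1)/2 * (bb + aa + ee - 2*ab + 2*be - 2*ae)"
    using n Q by simp
  have eq: "(n*(n+1)/2*bb + n*bw - n*ab - n*be) - ((n-1)*n/2*aa + n*aw + n*(n+1)/2*ee - n*ae)
     = (n * (n+1) * (bb - 2*ab + aa) - n * (- bw - n*ab - n*be + aw + n*aa + n*ae))
       - n*(n+1)/2 * (bb + aa + ee - 2*ab + 2*be - 2*ae)"
    by (simp add: field_simps)
  show ?thesis using eq q H by linarith
qed

lemma inv_sq_sum: "(\<Sum>j<k. 1 / (real j + 1)\<^sup>2) \<le> 2 - 2 / (real k + 1)"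
proof (induction k)
  case 0
  then show ?case by simp
next
  case (Suc k)
  have e1: "2 / (real k + 1) - 2 / (real k + 2) = 2 / ((real k + 1) * (real k + 2))"
    by (simp add: field_simps)
  have e2: "1 / (real k + 1)\<^sup>2 \<le> 2 / ((real k + 1) * (real k + 2))"
  proof -
    have m: "(real k + 1) * (real k + 2) \<le> 2 * ((real k + 1) * (real k + 1))"
      by (simp add: algebra_simps)
    have "1 / (real k + 1)\<^sup>2 = 2 / (2 * ((real k + 1) * (real k + 1)))"
      by (simp add: power2_eq_square)
    also have "\<dots> \<le> 2 / ((real k + 1) * (real k + 2))"
      by (rule divide_left_mono) (use m in auto)
    finally show ?thesis .
  qed
  have "1 / (real k + 1)\<^sup>2 \<le> 2 / (real k + 1) - 2 / (real k + 2)"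
    using e1 e2 by simp
  then show ?case using Suc by (simp add: add.commute)
qed

lemma amgm_delta:
  fixes d :: real and j :: nat
  shows "d \<le> ((real j + 1)\<^sup>2 * d\<^sup>2 + 1 / (real j + 1)\<^sup>2) / 2"
proof -
  have "0 \<le> ((real j + 1) * d - 1 / (real j + 1))\<^sup>2" by simp
  also have "\<dots> = (real j + 1)\<^sup>2 * d\<^sup>2 + 1 / (real j + 1)\<^sup>2 - 2 * ((real j + 1) * d) * (1 / (real j + 1))"
    by (simp add: power2_diff power_mult_distrib power_divide)
  also have "2 * ((real j + 1) * d) * (1 / (real j + 1)) = 2 * d"
    by (simp add: field_simps)
  finally show ?thesis by simp
qed

theorem corollary3:
  fixes G :: "'a::euclidean_space \<Rightarrow> 'a"
    and L :: real and zstar :: 'a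
    and \<gamma> :: "nat \<Rightarrow> real"
    and z zt :: "nat \<Rightarrow> 'a"
  assumes L_pos: "L > 0"
    and coco: "co_coercive (1 / L) G"
    and zero: "G zstar = 0"
    and gamma_nonneg: "\<And>k. \<gamma> k \<ge> 0"
    and gamma_sum: "summable (\<lambda>k. (real k + 1)\<^sup>2 * (\<gamma> k)\<^sup>2)"
    and inexact: "\<And>k. norm (G (z k) - zt k) \<le> \<gamma> k"
    and step: "\<And>k. z (Suc k) =
        (1 / (real k + 2)) *\<^sub>R z 0 + (1 - 1 / (real k + 2)) *\<^sub>R z k
        - ((1 - 1 / (real k + 2)) / L) *\<^sub>R zt k"
  shows "\<exists>C>0. \<forall>k. norm (G (z k)) \<le> C / (real k + 1)
                  \<and> norm (z (Suc k) - z k) \<le> C / (real k + 1)"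
proof -
  define F where "F x = (1/L) *\<^sub>R G x" for x
  define e where "e k = (1/L) *\<^sub>R (zt k - G (z k))" for k
  define \<delta> where "\<delta> k = \<gamma> k / L" for k
  define D where "D = norm (z 0 - zstar)"
  have GF: "G x = L *\<^sub>R F x" for x
    using L_pos by (simp add: F_def)
  have coF: "(norm (F x - F y))\<^sup>2 \<le> inner (F x - F y) (x - y)" for x y
  proof -
    have c: "1/L * (norm (G x - G y))\<^sup>2 \<le> inner (G x - G y) (x - y)"
      using coco unfolding co_coercive_def by blast
    have "F x - F y = (1/L) *\<^sub>R (G x - G y)"
      by (simp add: F_def scaleR_diff_right)
    then have n: "(norm (F x - F y))\<^sup>2 = (1/L) * (1/L * (norm (G x - G y))\<^sup>2)"
      and i: "inner (F x - F y) (x - y) = (1/L) * inner (G x - G y) (x - y)"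
      using L_pos by (simp_all add: power2_eq_square)
    show ?thesis unfolding n i
      by (rule mult_left_mono[OF c]) (use L_pos in simp)
  qed
  have Fz: "F zstar = 0" by (simp add: F_def zero)
  have dnn: "\<delta> k \<ge> 0" for k using gamma_nonneg L_pos by (simp add: \<delta>_def)
  have eb: "norm (e k) \<le> \<delta> k" for k
  proof -
    have "norm (e k) = norm (G (z k) - zt k) / L"
      using L_pos by (simp add: e_def norm_minus_commute)
    then show ?thesis using inexact[of k] L_pos by (simp add: \<delta>_def divide_right_mono)
  qed
  have rel: "(real k + 2) *\<^sub>R (z (Suc k) - z k) = (z 0 - z k) - (real k + 1) *\<^sub>R (F (z k) + e k)" for k
  proof -
    have fe: "F (z k) + e k = (1/L) *\<^sub>R zt k"
      by (simp add: F_def e_def scaleR_diff_right)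
    have s: "1 - 1 / (real k + 2) = (real k + 1) / (real k + 2)"
      by (simp add: field_simps)
    have "(real k + 2) *\<^sub>R z (Suc k) = z 0 + (real k + 1) *\<^sub>R z k - (real k + 1) *\<^sub>R ((1/L) *\<^sub>R zt k)"
      unfolding step[of k] s using L_pos
      by (simp add: scaleR_diff_right scaleR_add_right)
    moreover have "(real k + 2) *\<^sub>R z k = (real k + 1) *\<^sub>R z k + z k"
      by (metis add.commute add.left_commute one_add_one scaleR_add_left scaleR_one)
    ultimately show ?thesis unfolding fe
      by (simp add: scaleR_diff_right)
  qed
  define W where "W k = (real k * (real k + 1) / 2) * (norm (F (z k)))\<^sup>2 + (real k + 1) * inner (F (z k)) (z k - z 0)" for k
  have Wstep: "W (Suc k) \<le> W k + (real k + 1) * (real k + 2) / 2 * (\<delta> k)\<^sup>2 + \<delta> k * ((real k + 1) * norm (F (z k)))" for k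
  proof -
    define n where "n = real k + 1"
    define a where "a = F (z k)"
    define b where "b = F (z (Suc k))"
    define w where "w = z k - z 0"
    define v where "v = z (Suc k) - z k"
    define ee where "ee = e k"
    have npos: "n > 0" by (simp add: n_def)
    have rv: "(n + 1) *\<^sub>R v = - w - n *\<^sub>R a - n *\<^sub>R ee"
      using rel[of k] unfolding n_def v_def w_def a_def ee_def
      by (simp add: algebra_simps scaleR_add_right)
    have c1: "(norm (b - a))\<^sup>2 \<le> inner (b - a) v"
      using coF[of "z (Suc k)" "z k"] unfolding a_def b_def v_def .
    have c2: "n * (n+1) * (norm (b - a))\<^sup>2 \<le> n * inner (b - a) ((n + 1) *\<^sub>R v)"
      using mult_left_mono[OF c1, of "n * (n+1)"] npos by (simp add: algebra_simps)
    have H: "n * (n+1) * (inner b b - 2 * inner a b + inner a a)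
        \<le> n * (- inner b w - n * inner a b - n * inner b ee + inner a w + n * inner a a + n * inner a ee)"
    proof -
      have e1: "(norm (b - a))\<^sup>2 = inner b b - 2 * inner a b + inner a a"
        unfolding power2_norm_eq_inner by (simp add: inner_diff_left inner_diff_right inner_commute)
      have e2: "inner (b - a) (- w - n *\<^sub>R a - n *\<^sub>R ee) = - inner b w - n * inner a b - n * inner b ee + inner a w + n * inner a a + n * inner a ee"
        by (simp add: inner_diff_left inner_diff_right inner_commute) (simp add: algebra_simps)
      show ?thesis using c2 unfolding rv e1 e2 .
    qed
    have Q: "0 \<le> inner b b + inner a a + inner ee ee - 2 * inner a b + 2 * inner b ee - 2 * inner a ee"
    proof -
      have "0 \<le> inner (b - a + ee) (b - a + ee)" by simp
      then show ?thesis by (simp add: inner_simps inner_commute algebra_simps)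
    qed
    note P = pot_scalar[OF npos H Q]
    have zw: "z (Suc k) - z 0 = w + v" by (simp add: w_def v_def)
    have ib: "(n + 1) * inner b (w + v) = n * inner b w - n * inner a b - n * inner b ee"
    proof -
      have "(n + 1) * inner b (w + v) = (n + 1) * inner b w + inner b ((n+1) *\<^sub>R v)"
        by (simp add: inner_add_right algebra_simps)
      also have "\<dots> = n * inner b w - n * inner a b - n * inner b ee"
        unfolding rv by (simp add: inner_diff_right inner_commute algebra_simps)
      finally show ?thesis .
    qed
    have WS: "W (Suc k) = n * (n + 1) / 2 * inner b b + (n + 1) * inner b (w + v)"
      unfolding W_def zw by (simp add: n_def b_def power2_norm_eq_inner algebra_simps)
    have WK: "W k = (n - 1) * n / 2 * inner a a + n * inner a w"
      unfolding W_def by (simp add: n_def a_def w_def power2_norm_eq_inner)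
    have ee2: "inner ee ee \<le> (\<delta> k)\<^sup>2"
      using eb[of k] unfolding ee_def power2_norm_eq_inner[symmetric]
      by (simp add: power_mono)
    have ee2': "n * (n + 1) / 2 * inner ee ee \<le> (real k + 1) * (real k + 2) / 2 * (\<delta> k)\<^sup>2"
      using mult_left_mono[OF ee2, of "n * (n+1) / 2"] npos by (simp add: n_def algebra_simps)
    have ae: "- (n * inner a ee) \<le> \<delta> k * ((real k + 1) * norm (F (z k)))"
    proof -
      have "- inner a ee \<le> norm a * norm ee"
        using norm_cauchy_schwarz[of a "- ee"] by simp
      also have "\<dots> \<le> norm a * \<delta> k"
        using eb[of k] by (simp add: ee_def mult_left_mono)
      finally have "- inner a ee \<le> norm a * \<delta> k" .
      then have "n * (- inner a ee) \<le> n * (norm a * \<delta> k)"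
        using npos by (intro mult_left_mono) auto
      then show ?thesis by (simp add: n_def a_def algebra_simps)
    qed
    show ?thesis unfolding WS WK ib using P ee2' ae by linarith
  qed
  define x where "x j = (real j + 1) * norm (F (z j))" for j
  have xnn: "x j \<ge> 0" for j by (simp add: x_def)
  have Wsum: "W k \<le> (\<Sum>j<k. (real j + 1) * (real j + 2) / 2 * (\<delta> j)\<^sup>2 + \<delta> j * x j)" for k
  proof (induction k)
    case 0
    then show ?case by (simp add: W_def)
  next
    case (Suc k)
    then show ?case using Wstep[of k] by (simp add: x_def)
  qed
  have Dnn: "D \<ge> 0" by (simp add: D_def)
  have Wlow: "(x k)\<^sup>2 / 2 - D * x k \<le> W k" for k
  proof -
    define a where "a = F (z k)"
    have c: "(norm a)\<^sup>2 \<le> inner a (z k - zstar)"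
      using coF[of "z k" zstar] unfolding Fz a_def by simp
    have cs: "inner a (z 0 - zstar) \<le> norm a * D"
      using norm_cauchy_schwarz[of a "z 0 - zstar"] by (simp add: D_def)
    have "inner a (z k - z 0) = inner a (z k - zstar) - inner a (z 0 - zstar)"
      by (simp add: inner_diff_right)
    then have i: "(norm a)\<^sup>2 - norm a * D \<le> inner a (z k - z 0)" using c cs by linarith
    have "(real k + 1) * ((norm a)\<^sup>2 - norm a * D) \<le> (real k + 1) * inner a (z k - z 0)"
      by (rule mult_left_mono[OF i]) simp
    then have "real k * (real k + 1) / 2 * (norm a)\<^sup>2 + (real k + 1) * ((norm a)\<^sup>2 - norm a * D) \<le> W k"
      unfolding W_def a_def by linarith
    moreover have "real k * (real k + 1) / 2 * (norm a)\<^sup>2 + (real k + 1) * ((norm a)\<^sup>2 - norm a * D)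
        = (real k + 1) * (real k + 2) / 2 * (norm a)\<^sup>2 - D * x k"
      by (simp add: x_def a_def algebra_simps)
    moreover have "(x k)\<^sup>2 / 2 \<le> (real k + 1) * (real k + 2) / 2 * (norm a)\<^sup>2"
    proof -
      have "(real k + 1) * (real k + 1) * (norm a)\<^sup>2 \<le> (real k + 1) * (real k + 2) * (norm a)\<^sup>2"
        by (intro mult_right_mono mult_left_mono) auto
      then show ?thesis by (simp add: x_def a_def power_mult_distrib power2_eq_square mult_ac)
    qed
    ultimately show ?thesis by linarith
  qed
  define S where "S = suminf (\<lambda>k. (real k + 1)\<^sup>2 * (\<gamma> k)\<^sup>2) / L\<^sup>2"
  have Sk: "(\<Sum>j<k. (real j + 1)\<^sup>2 * (\<delta> j)\<^sup>2) \<le> S" for k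
  proof -
    have "(\<Sum>j<k. (real j + 1)\<^sup>2 * (\<delta> j)\<^sup>2) = (\<Sum>j<k. (real j + 1)\<^sup>2 * (\<gamma> j)\<^sup>2) / L\<^sup>2"
      by (simp add: \<delta>_def sum_divide_distrib power_divide)
    also have "\<dots> \<le> S" unfolding S_def
      by (rule divide_right_mono[OF sum_le_suminf[OF gamma_sum]]) auto
    finally show ?thesis .
  qed
  have Snn: "S \<ge> 0" using Sk[of 0] by simp
  have Sterm: "(real k + 1)\<^sup>2 * (\<delta> k)\<^sup>2 \<le> S" for k
  proof -
    have "(real k + 1)\<^sup>2 * (\<delta> k)\<^sup>2 \<le> (\<Sum>j<Suc k. (real j + 1)\<^sup>2 * (\<delta> j)\<^sup>2)"
      by (rule member_le_sum) auto
    then show ?thesis using Sk[of "Suc k"] by linarith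
  qed
  have Sk2: "(\<Sum>j<k. (real j + 1) * (real j + 2) / 2 * (\<delta> j)\<^sup>2) \<le> S" for k
  proof -
    have "(\<Sum>j<k. (real j + 1) * (real j + 2) / 2 * (\<delta> j)\<^sup>2) \<le> (\<Sum>j<k. (real j + 1)\<^sup>2 * (\<delta> j)\<^sup>2)"
    proof (rule sum_mono)
      fix j assume "j \<in> {..<k}"
      have "(real j + 1) * (real j + 2) / 2 \<le> (real j + 1)\<^sup>2"
        by (simp add: power2_eq_square algebra_simps)
      then show "(real j + 1) * (real j + 2) / 2 * (\<delta> j)\<^sup>2 \<le> (real j + 1)\<^sup>2 * (\<delta> j)\<^sup>2"
        by (rule mult_right_mono) simp
    qed
    then show ?thesis using Sk[of k] by linarith
  qed
  define E where "E = (S + 2) / 2"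
  have Enn: "E \<ge> 0" using Snn by (simp add: E_def)
  have Ek: "(\<Sum>j<k. \<delta> j) \<le> E" for k
  proof -
    have "(\<Sum>j<k. \<delta> j) \<le> (\<Sum>j<k. ((real j + 1)\<^sup>2 * (\<delta> j)\<^sup>2 + 1 / (real j + 1)\<^sup>2) / 2)"
      by (rule sum_mono) (rule amgm_delta)
    also have "\<dots> = ((\<Sum>j<k. (real j + 1)\<^sup>2 * (\<delta> j)\<^sup>2) + (\<Sum>j<k. 1 / (real j + 1)\<^sup>2)) / 2"
      by (simp add: sum_divide_distrib[symmetric] sum.distrib)
    also have "\<dots> \<le> E"
    proof -
      have "0 \<le> 2 / (real k + 1)" by simp
      then have "(\<Sum>j<k. (real j + 1)\<^sup>2 * (\<delta> j)\<^sup>2) + (\<Sum>j<k. 1 / (real j + 1)\<^sup>2) \<le> S + 2"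
        using Sk[of k] inv_sq_sum[of k] by linarith
      then show ?thesis unfolding E_def by (rule divide_right_mono) simp
    qed
    finally show ?thesis .
  qed
  define M where "M = 2 * (D + E + S + 1)"
  have xb: "x k \<le> M" for k
  proof (induction k rule: less_induct)
    case (less k)
    have "(\<Sum>j<k. \<delta> j * x j) \<le> (\<Sum>j<k. M * \<delta> j)"
    proof (rule sum_mono)
      fix j assume "j \<in> {..<k}"
      then have "x j \<le> M" using less by simp
      then have "\<delta> j * x j \<le> \<delta> j * M" using dnn[of j] by (rule mult_left_mono)
      then show "\<delta> j * x j \<le> M * \<delta> j" by (simp add: mult.commute)
    qed
    also have "\<dots> = M * (\<Sum>j<k. \<delta> j)" by (simp add: sum_distrib_left)
    also have "\<dots> \<le> M * E" using Ek[of k] Dnn Enn Snn by (intro mult_left_mono) (auto simp: M_def)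
    finally have sx: "(\<Sum>j<k. \<delta> j * x j) \<le> M * E" .
    have "W k \<le> (\<Sum>j<k. (real j + 1) * (real j + 2) / 2 * (\<delta> j)\<^sup>2) + (\<Sum>j<k. \<delta> j * x j)"
      using Wsum[of k] by (simp add: sum.distrib)
    then have key: "(x k)\<^sup>2 / 2 - D * x k \<le> S + M * E"
      using Wlow[of k] Sk2[of k] sx by linarith
    show ?case
    proof (rule ccontr)
      assume "\<not> x k \<le> M"
      then have xM: "x k > M" by simp
      have M1: "M \<ge> 2" using Dnn Enn Snn by (simp add: M_def)
      have "x k * (D + E + S + 1) \<le> x k * (x k / 2)"
        using xM xnn[of k] by (intro mult_left_mono) (auto simp: M_def)
      moreover have "E * M \<le> E * x k" using xM Enn by (intro mult_left_mono) auto
      moreover have "S * 1 \<le> S * x k" using xM M1 Snn by (intro mult_left_mono) auto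
      moreover have "x k * (x k / 2) = (x k)\<^sup>2 / 2" by (simp add: power2_eq_square)
      ultimately have "D * x k + E * M + S + x k \<le> (x k)\<^sup>2 / 2"
        by (simp add: algebra_simps)
      then show False using key xM M1 by (simp add: algebra_simps)
    qed
  qed
  have nonexp: "norm ((p - F p) - (q - F q)) \<le> norm (p - q)" for p q
  proof -
    have eq: "(p - F p) - (q - F q) = (p - q) - (F p - F q)" by simp
    have "(norm ((p - F p) - (q - F q)))\<^sup>2 = (norm (p - q))\<^sup>2 - 2 * inner (F p - F q) (p - q) + (norm (F p - F q))\<^sup>2"
      unfolding eq power2_norm_eq_inner by (simp add: inner_diff_left inner_diff_right inner_commute)
    then have "(norm ((p - F p) - (q - F q)))\<^sup>2 \<le> (norm (p - q))\<^sup>2"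
      using coF[of p q] zero_le_power2[of "norm (F p - F q)"] by linarith
    then show ?thesis by (rule power2_le_imp_le) simp
  qed
  have dist: "norm (z k - zstar) \<le> D + (\<Sum>j<k. \<delta> j)" for k
  proof (induction k)
    case 0
    then show ?case by (simp add: D_def)
  next
    case (Suc k)
    define n where "n = real k + 1"
    have eqv: "(real k + 2) *\<^sub>R (z (Suc k) - zstar) = (z 0 - zstar) + n *\<^sub>R ((z k - F (z k)) - (zstar - F zstar)) - n *\<^sub>R e k"
    proof -
      have "(real k + 2) *\<^sub>R (z (Suc k) - zstar) = (real k + 2) *\<^sub>R (z (Suc k) - z k) + (real k + 2) *\<^sub>R (z k - zstar)"
        by (simp add: scaleR_diff_right)
      also have "(real k + 2) *\<^sub>R (z k - zstar) = n *\<^sub>R (z k - zstar) + (z k - zstar)"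
        by (metis n_def add.commute add.left_commute one_add_one scaleR_add_left scaleR_one)
      finally show ?thesis unfolding rel n_def[symmetric] Fz
        by (simp add: scaleR_diff_right scaleR_add_right)
    qed
    have "(real k + 2) * norm (z (Suc k) - zstar) \<le> D + n * norm ((z k - F (z k)) - (zstar - F zstar)) + n * norm (e k)"
    proof -
      have "(real k + 2) * norm (z (Suc k) - zstar) = norm ((real k + 2) *\<^sub>R (z (Suc k) - zstar))"
        by simp
      also have "\<dots> \<le> norm (z 0 - zstar) + norm (n *\<^sub>R ((z k - F (z k)) - (zstar - F zstar))) + norm (n *\<^sub>R e k)"
        unfolding eqv
        using norm_triangle_ineq4[of "(z 0 - zstar) + n *\<^sub>R ((z k - F (z k)) - (zstar - F zstar))" "n *\<^sub>R e k"]
          norm_triangle_ineq[of "z 0 - zstar" "n *\<^sub>R ((z k - F (z k)) - (zstar - F zstar))"]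
        by linarith
      also have "\<dots> = D + n * norm ((z k - F (z k)) - (zstar - F zstar)) + n * norm (e k)"
        by (simp add: D_def n_def)
      finally show ?thesis .
    qed
    also have "\<dots> \<le> D + n * (D + (\<Sum>j<k. \<delta> j)) + n * \<delta> k"
    proof -
      have "norm ((z k - F (z k)) - (zstar - F zstar)) \<le> D + (\<Sum>j<k. \<delta> j)"
        using nonexp[of "z k" zstar] Suc.IH by linarith
      then have a: "n * norm ((z k - F (z k)) - (zstar - F zstar)) \<le> n * (D + (\<Sum>j<k. \<delta> j))"
        by (rule mult_left_mono) (simp add: n_def)
      have b: "n * norm (e k) \<le> n * \<delta> k"
        using eb[of k] by (rule mult_left_mono) (simp add: n_def)
      show ?thesis using a b by linarith
    qed
    finally have f: "(real k + 2) * norm (z (Suc k) - zstar) \<le> D + n * (D + (\<Sum>j<k. \<delta> j)) + n * \<delta> k" .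
    have sn: "(\<Sum>j<k. \<delta> j) \<ge> 0" using dnn by (simp add: sum_nonneg)
    have "(real k + 2) * norm (z (Suc k) - zstar) \<le> (real k + 2) * (D + (\<Sum>j<Suc k. \<delta> j))"
      using f sn dnn[of k] unfolding n_def by (simp add: algebra_simps)
    then show ?case by simp
  qed
  define C where "C = L * M + 2 * D + E + M + S + 2"
  have Mnn: "M \<ge> 0" using Dnn Enn Snn by (simp add: M_def)
  have LM: "L * M \<ge> 0" using Mnn L_pos by simp
  have Cpos: "C > 0" unfolding C_def using Dnn Enn Snn Mnn LM by linarith
  have "\<forall>k. norm (G (z k)) \<le> C / (real k + 1) \<and> norm (z (Suc k) - z k) \<le> C / (real k + 1)"
  proof
    fix k
    have k1: "real k + 1 > 0" by simp
    have g: "norm (G (z k)) = L * x k / (real k + 1)"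
      using L_pos by (simp add: GF x_def)
    have "L * x k \<le> L * M" using xb[of k] L_pos by simp
    also have "\<dots> \<le> C" unfolding C_def using Dnn Enn Snn Mnn by linarith
    finally have g2: "norm (G (z k)) \<le> C / (real k + 1)"
      unfolding g by (rule divide_right_mono) simp
    have t: "(real k + 1) * \<delta> k \<le> 1 + S"
    proof -
      have t2: "((real k + 1) * \<delta> k)\<^sup>2 \<le> S" using Sterm[of k] by (simp add: power_mult_distrib)
      have "(real k + 1) * \<delta> k \<le> 1 + ((real k + 1) * \<delta> k)\<^sup>2"
      proof -
        define t where "t = (real k + 1) * \<delta> k"
        have "0 \<le> (t - 1)\<^sup>2" by simp
        then have "2 * t \<le> t\<^sup>2 + 1" by (simp add: power2_diff)
        moreover have "0 \<le> t\<^sup>2" by simp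
        ultimately have "t \<le> 1 + t\<^sup>2" by linarith
        then show ?thesis by (simp add: t_def)
      qed
      then show ?thesis using t2 by linarith
    qed
    have "(real k + 2) * norm (z (Suc k) - z k) \<le> norm (z 0 - z k) + (real k + 1) * norm (F (z k)) + (real k + 1) * norm (e k)"
    proof -
      have "(real k + 2) * norm (z (Suc k) - z k) = norm ((z 0 - z k) - (real k + 1) *\<^sub>R (F (z k) + e k))"
      proof -
        have "norm ((real k + 2) *\<^sub>R (z (Suc k) - z k)) = (real k + 2) * norm (z (Suc k) - z k)"
          by simp
        then show ?thesis unfolding rel by simp
      qed
      also have "\<dots> \<le> norm (z 0 - z k) + norm ((real k + 1) *\<^sub>R (F (z k) + e k))"
        by (rule norm_triangle_ineq4)
      also have "norm ((real k + 1) *\<^sub>R (F (z k) + e k)) \<le> (real k + 1) * norm (F (z k)) + (real k + 1) * norm (e k)"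
      proof -
        have "norm ((real k + 1) *\<^sub>R (F (z k) + e k)) = (real k + 1) * norm (F (z k) + e k)" by simp
        also have "\<dots> \<le> (real k + 1) * (norm (F (z k)) + norm (e k))"
          by (rule mult_left_mono[OF norm_triangle_ineq]) simp
        finally show ?thesis by (simp add: distrib_left)
      qed
      finally show ?thesis by simp
    qed
    also have "\<dots> \<le> (2 * D + E) + M + (1 + S)"
    proof -
      have "norm (z 0 - z k) \<le> norm (z 0 - zstar) + norm (z k - zstar)"
      proof -
        have "z 0 - z k = (z 0 - zstar) - (z k - zstar)" by simp
        then show ?thesis using norm_triangle_ineq4[of "z 0 - zstar" "z k - zstar"] by simp
      qed
      then have a: "norm (z 0 - z k) \<le> 2 * D + E" using dist[of k] Ek[of k] by (simp add: D_def)
      have b: "(real k + 1) * norm (F (z k)) \<le> M" using xb[of k] by (simp add: x_def)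
      have c: "(real k + 1) * norm (e k) \<le> (real k + 1) * \<delta> k"
        using eb[of k] by (rule mult_left_mono) simp
      show ?thesis using a b c t by linarith
    qed
    also have "\<dots> \<le> C" unfolding C_def using LM by linarith
    finally have h: "(real k + 2) * norm (z (Suc k) - z k) \<le> C" .
    have "norm (z (Suc k) - z k) \<le> C / (real k + 2)"
      using h by (simp add: field_simps)
    also have "\<dots> \<le> C / (real k + 1)"
      using Cpos by (intro divide_left_mono) auto
    finally show "norm (G (z k)) \<le> C / (real k + 1) \<and> norm (z (Suc k) - z k) \<le> C / (real k + 1)"
      using g2 by simp
  qed
  then show ?thesis using Cpos by blast
qed

end
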